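(* Let $p$ be a prime, $u_1>u_2\ge 1$ integers, $s_1=p^{u_1}$, $s_2=p^{u_2}$, $F=\mathrm{GF}(s_1)$ and $G=\mathrm{GF}(s_2)$ represented as below, and let $\delta$ be either the truncation projection $\phi$ or the modulus projection $\varphi$. If $D$ is a difference matrix $D(b,c,s_1)$ with entries in $F$ (over the additive group of $F$), then $\delta(D)$ is a difference matrix $D(b,c,s_2)$ over the additive group of $G$.
   Context: $F$ is represented as the set of polynomials over $\mathrm{GF}(p)$ of degree less than $u_1$ with arithmetic modulo an irreducible polynomial $p_1(x)$ of degree $u_1$; $G$ is represented as the polynomials over $\mathrm{GF}(p)$ of degree less than $u_2$ with arithmetic modulo an irreducible polynomial $p_2(x)$ of degree $u_2$. The truncation projection is $\phi(a_0+a_1x+\cdots+a_{u_1-1}x^{u_1-1})=a_0+\cdots+a_{u_2-1}x^{u_2-1}$; the modulus projection is $\varphi(f(x))=f(x)\bmod p_2(x)$. For an array $D$, $\delta(D)$ denotes entrywise application of $\delta$. A difference matrix $D(b,c,g)$ over a finite abelian group of order $g$ is a $b\times c$ array with entries in the group such that, for any two distinct columns, their entrywise difference contains every group element equally often. *)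

theory Defs
  imports "Berlekamp_Zassenhaus.Finite_Field" "HOL-Computational_Algebra.Polynomial"
begin

text \<open>GF(p) is the type 'p mod_ring (CARD('p) = p prime).  GF(p^u) is represented
  as the polynomials over GF(p) of degree less than u (arithmetic modulo an
  irreducible polynomial of degree u; the additive group is polynomial addition).\<close>

definition gf_carrier :: "nat \<Rightarrow> ('p::prime_card mod_ring) poly set" where
  "gf_carrier u = {f. degree f < u}"

definition trunc_proj :: "nat \<Rightarrow> 'a::comm_ring_1 poly \<Rightarrow> 'a poly" where
  "trunc_proj u f = (\<Sum>i<u. monom (coeff f i) i)"

definition mod_proj :: "'a::field poly \<Rightarrow> 'a poly \<Rightarrow> 'a poly" where
  "mod_proj p2 f = f mod p2"

definition difference_matrix ::
  "nat \<Rightarrow> nat \<Rightarrow> nat \<Rightarrow> 'a::ab_group_add set \<Rightarrow> (nat \<Rightarrow> nat \<Rightarrow> 'a) \<Rightarrow> bool" where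
  "difference_matrix b c g S D \<longleftrightarrow>
     card S = g \<and>
     (\<forall>i<b. \<forall>j<c. D i j \<in> S) \<and>
     (\<forall>j1<c. \<forall>j2<c. j1 \<noteq> j2 \<longrightarrow>
        (\<exists>lam. \<forall>x\<in>S. card {i. i < b \<and> D i j1 - D i j2 = x} = lam))"

end

theory Submission
  imports Defs "Berlekamp_Zassenhaus.Distinct_Degree_Factorization"
begin

lemma card_gf2:
  fixes p2 :: "('p::prime_card mod_ring) poly"
  assumes "irreducible p2" "degree p2 = u2"
  shows "card (gf_carrier u2 :: 'p mod_ring poly set) = CARD('p) ^ u2"
proof -
  interpret poly_mod_type_irr "CARD('p)" p2 by (unfold_locales, auto simp add: assms)
  have "card carrier_irr = CARD('p)^(degree p2)" by simp
  moreover have "carrier_irr = gf_carrier u2"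
    unfolding carrier_irr_def gf_carrier_def using assms by simp
  ultimately show ?thesis using assms by simp
qed

lemma dm_proj:
  fixes S1 S2 :: "'a::ab_group_add set" and d :: "'a \<Rightarrow> 'a"
  assumes dm: "difference_matrix b c g1 S1 D"
    and g1: "g1 > 0"
    and cS2: "card S2 = g2"
    and sub: "S2 \<subseteq> S1"
    and cl: "\<And>x y. x \<in> S1 \<Longrightarrow> y \<in> S1 \<Longrightarrow> x - y \<in> S1"
    and cl2: "\<And>x y. x \<in> S1 \<Longrightarrow> y \<in> S1 \<Longrightarrow> x + y \<in> S1"
    and into: "\<And>x. x \<in> S1 \<Longrightarrow> d x \<in> S2"
    and idm: "\<And>x. x \<in> S2 \<Longrightarrow> d x = x"
    and add: "\<And>x y. x \<in> S1 \<Longrightarrow> y \<in> S1 \<Longrightarrow> d (x + y) = d x + d y"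
    and dif: "\<And>x y. x \<in> S1 \<Longrightarrow> y \<in> S1 \<Longrightarrow> d (x - y) = d x - d y"
  shows "difference_matrix b c g2 S2 (\<lambda>i j. d (D i j))"
proof -
  have cS1: "card S1 = g1" and ent: "\<forall>i<b. \<forall>j<c. D i j \<in> S1"
    and bal: "\<forall>j1<c. \<forall>j2<c. j1 \<noteq> j2 \<longrightarrow>
        (\<exists>lam. \<forall>x\<in>S1. card {i. i < b \<and> D i j1 - D i j2 = x} = lam)"
    using dm unfolding difference_matrix_def by auto
  have fin: "finite S1" using cS1 g1 card_ge_0_finite by blast
  define fib where "fib x = {y \<in> S1. d y = x}" for x
  have fibx: "fib x = (\<lambda>y. x + y) ` fib 0" if "x \<in> S2" for x
  proof
    show "fib x \<subseteq> (\<lambda>y. x + y) ` fib 0"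
    proof
      fix y assume y: "y \<in> fib x"
      have xs: "x \<in> S1" using sub that by auto
      have "y - x \<in> fib 0" using y xs cl dif idm[OF that] unfolding fib_def by auto
      moreover have "y = x + (y - x)" by simp
      ultimately show "y \<in> (\<lambda>y. x + y) ` fib 0" by blast
    qed
  next
    show "(\<lambda>y. x + y) ` fib 0 \<subseteq> fib x"
    proof
      fix z assume "z \<in> (\<lambda>y. x + y) ` fib 0"
      then obtain y where y: "y \<in> fib 0" "z = x + y" by blast
      have xs: "x \<in> S1" using sub that by auto
      show "z \<in> fib x" using y xs cl2 add idm[OF that] unfolding fib_def by auto
    qed
  qed
  have cfib: "card (fib x) = card (fib 0)" if "x \<in> S2" for x
    using fibx[OF that] by (simp add: card_image)
  have finfib: "finite (fib x)" for x using fin unfolding fib_def by auto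
  show ?thesis unfolding difference_matrix_def
  proof (intro conjI allI impI)
    show "card S2 = g2" by (rule cS2)
  next
    fix i j assume "i < b" "j < c" thus "d (D i j) \<in> S2" using ent into by auto
  next
    fix j1 j2 assume j: "j1 < c" "j2 < c" "j1 \<noteq> j2"
    obtain lam where lam: "\<forall>x\<in>S1. card {i. i < b \<and> D i j1 - D i j2 = x} = lam"
      using bal j by blast
    show "\<exists>lam. \<forall>x\<in>S2. card {i. i < b \<and> d (D i j1) - d (D i j2) = x} = lam"
    proof (intro exI ballI)
      fix x assume x: "x \<in> S2"
      have "{i. i < b \<and> d (D i j1) - d (D i j2) = x}
          = (\<Union>y\<in>fib x. {i. i < b \<and> D i j1 - D i j2 = y})"
        using ent j cl dif unfolding fib_def by auto
      also have "card \<dots> = (\<Sum>y\<in>fib x. card {i. i < b \<and> D i j1 - D i j2 = y})"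
        by (rule card_UN_disjoint) (auto simp: finfib)
      also have "\<dots> = (\<Sum>y\<in>fib x. lam)"
        by (rule sum.cong) (auto simp: lam fib_def)
      also have "\<dots> = lam * card (fib 0)" using cfib[OF x] by simp
      finally show "card {i. i < b \<and> d (D i j1) - d (D i j2) = x} = lam * card (fib 0)" .
    qed
  qed
qed

theorem lemma5:
  fixes p1 p2 :: "('p::prime_card mod_ring) poly"
    and u1 u2 b c :: nat
    and D :: "nat \<Rightarrow> nat \<Rightarrow> 'p mod_ring poly"
  assumes "u1 > u2" and "u2 \<ge> 1"
    and "irreducible p1" and "degree p1 = u1"
    and "irreducible p2" and "degree p2 = u2"
    and "difference_matrix b c (CARD('p) ^ u1) (gf_carrier u1) D"
  shows "difference_matrix b c (CARD('p) ^ u2) (gf_carrier u2)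
           (\<lambda>i j. trunc_proj u2 (D i j))
       \<and> difference_matrix b c (CARD('p) ^ u2) (gf_carrier u2)
           (\<lambda>i j. mod_proj p2 (D i j))"
proof
  have g1: "CARD('p) ^ u1 > 0" by simp
  have c2: "card (gf_carrier u2 :: 'p mod_ring poly set) = CARD('p) ^ u2"
    using card_gf2 assms(5,6) by blast
  have sub: "gf_carrier u2 \<subseteq> gf_carrier u1" using assms(1) unfolding gf_carrier_def by auto
  have cl: "x - y \<in> gf_carrier u1" if "x \<in> gf_carrier u1" "y \<in> gf_carrier u1" for x y :: "'p mod_ring poly"
    using that unfolding gf_carrier_def by (metis degree_diff_le_max le_less_trans max_less_iff_conj mem_Collect_eq)
  have cl2: "x + y \<in> gf_carrier u1" if "x \<in> gf_carrier u1" "y \<in> gf_carrier u1" for x y :: "'p mod_ring poly"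
    using that unfolding gf_carrier_def by (simp add: degree_add_less)
  have p2nz: "p2 \<noteq> 0" using assms(5) by auto
  show "difference_matrix b c (CARD('p) ^ u2) (gf_carrier u2) (\<lambda>i j. trunc_proj u2 (D i j))"
  proof (rule dm_proj[OF assms(7) g1 c2 sub cl cl2])
    have coeff_tr: "coeff (trunc_proj u2 f) n = (if n < u2 then coeff f n else 0)" for f :: "'p mod_ring poly" and n
      unfolding trunc_proj_def by (simp add: coeff_sum coeff_monom)
    show "trunc_proj u2 x \<in> gf_carrier u2" for x :: "'p mod_ring poly"
    proof -
      have "degree (trunc_proj u2 x) \<le> u2 - 1"
        by (rule degree_le) (auto simp add: coeff_tr)
      thus ?thesis using assms(2) unfolding gf_carrier_def by simp
    qed
    show "trunc_proj u2 x = x" if "x \<in> gf_carrier u2" for x :: "'p mod_ring poly"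
      using that unfolding gf_carrier_def
      by (intro poly_eqI) (auto simp: coeff_tr coeff_eq_0)
    show "trunc_proj u2 (x + y) = trunc_proj u2 x + trunc_proj u2 y" for x y :: "'p mod_ring poly"
      by (intro poly_eqI) (auto simp: coeff_tr)
    show "trunc_proj u2 (x - y) = trunc_proj u2 x - trunc_proj u2 y" for x y :: "'p mod_ring poly"
      by (intro poly_eqI) (auto simp: coeff_tr)
  qed
  show "difference_matrix b c (CARD('p) ^ u2) (gf_carrier u2) (\<lambda>i j. mod_proj p2 (D i j))"
  proof (rule dm_proj[OF assms(7) g1 c2 sub cl cl2])
    show "mod_proj p2 x \<in> gf_carrier u2" for x :: "'p mod_ring poly"
      unfolding gf_carrier_def mod_proj_def using assms(2,6) p2nz
      by (metis degree_0 degree_mod_less' le_less_trans less_one mem_Collect_eq not_le)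
    show "mod_proj p2 x = x" if "x \<in> gf_carrier u2" for x :: "'p mod_ring poly"
      using that assms(6) unfolding gf_carrier_def mod_proj_def by (simp add: mod_poly_less)
    show "mod_proj p2 (x + y) = mod_proj p2 x + mod_proj p2 y" for x y :: "'p mod_ring poly"
      unfolding mod_proj_def by (rule poly_mod_add_left)
    show "mod_proj p2 (x - y) = mod_proj p2 x - mod_proj p2 y" for x y :: "'p mod_ring poly"
      unfolding mod_proj_def by (rule poly_mod_diff_left)
  qed
qed

end
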